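(* In the algorithm PELEG described in the context, after each phase $m\ge 1$, \[ \max_{x,x'\in\mathcal X_m,\,x\ne x'}\|x-x'\|^2_{(V^m_{N_m})^{-1}}\le\frac{\left((1/2)^{m+1}\right)^2}{8\log(K^2/\delta_m)}. \]
   Context: Arms are a finite set $\mathcal{X}=\{x_1,\dots,x_K\}\subset\mathbb{R}^d$ with $\|x_k\|_2\le1$; rewards of arm $x$ are $\theta^{*T}x$ plus conditionally $1$-subgaussian noise, $\theta^*\in\mathbb R^d$ unknown. $\|x\|_A=\sqrt{x^TAx}$; $C=\lambda_{\min}(\sum_{k=1}^Kx_kx_k^T)$; $\mathcal P_K$ is the probability simplex on $[K]$; $B(0,D)$ the closed Euclidean ball of radius $D$; $\log$ is natural log. Algorithm PELEG (input $\mathcal X,\delta$). Set $m=1$, $\mathcal X_1=\mathcal X$. While $|\mathcal X_m|>1$ (phase $m$): 1. $\delta_m=\delta/m^2$, $r_m=\sqrt{8\log(K^2/\delta_m)}$, $D_m=2(\sqrt2-1)\sqrt{C/(\max_{x,x'\in\mathcal X_m,x\ne x'}\|x-x'\|_2^2\log K)}$, $\epsilon_m=\min\{1, D_m\sqrt C/r_m\}\,(1/2)^{m+1}$. 2. For $x\in\mathcal X_m$, $\mathcal C_m(x)=\{\lambda\in\mathbb R^d:\exists x'\in\mathcal X_m, x'\ne x,\ \lambda^Tx'\ge\lambda^Tx+\epsilon_m\}$; let $\Lambda_m=\bigcup_{x\in\mathcal X_m}\mathcal C_m(x)\cap B(0,D_m)$. 3. Burn-in: play each arm of $\mathcal X$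 once; set $n^k_K=1$ for all $k$, $V^m_K=\sum_{k=1}^Kx_kx_k^T$, $t=K$. Initialize afresh an exponential-weights (Hedge) learner over the $K$ experts $\hat e_1,\dots,\hat e_K$. 4. While $\min_{\lambda\in\Lambda_m}\|\lambda\|^2_{V^m_t}\le r_m^2$: set $t\leftarrow t+1$; get $w_t\in\mathcal P_K$ from the Hedge learner and form $W_t=\sum_kw_t^kx_kx_k^T$; let $\lambda_t\in\mathrm{argmin}_{\lambda\in\Lambda_m}\|\lambda\|^2_{W_t}$; set $U_t^k=(\lambda_t^Tx_k)^2$ and feed the Hedge learner the loss $l_t(w)=-w^TU_t$; play arm $k_t=\mathrm{argmin}_{k} n^k_{t-1}/\sum_{s=1}^t w_s^k$, increment its count, observe the reward $Y_t$, and set $V^m_t=V^m_{t-1}+x_{k_t}x_{k_t}^T$. 5. Set $N_m=t$ (so the phase stops at the first $t\ge K$ with $\min_{\lambda\in\Lambda_m}\|\lambda\|^2_{V^m_t}> r_m^2$), compute $\hat\theta_m=(V^m_{N_m})^{-1}\sum_{s=1}^{N_m}Y_sx_{k_s}$, set $\mathcal X_{m+1}=\mathcal X_m\setminus\{x\in\mathcal X_m:\exists x'\in\mathcal X_m,\ \hat\theta_m^T(x'-x)>2^{-(m+2)}\}$, and $m\leftarrow m+1$. Return $\mathcal X_m$. *)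

theory Defs
  imports "HOL-Analysis.Analysis"
begin

definition outer :: "real^'d \<Rightarrow> real^'d \<Rightarrow> real^'d^'d" where
  "outer u v = (\<chi> i j. u $ i * v $ j)"

definition wnorm2 :: "real^'d^'d \<Rightarrow> real^'d \<Rightarrow> real" where
  "wnorm2 A z = z \<bullet> (A *v z)"

definition lambda_min :: "real^'d^'d \<Rightarrow> real" where
  "lambda_min A = Min {\<mu>. \<exists>v. v \<noteq> 0 \<and> A *v v = \<mu> *\<^sub>R v}"

text \<open>Parameters of phase m of PELEG. Arms are x 0, ..., x (K-1).\<close>
definition gram :: "nat \<Rightarrow> (nat \<Rightarrow> real^'d) \<Rightarrow> real^'d^'d" where
  "gram K x = (\<Sum>k<K. outer (x k) (x k))"

definition Cconst :: "nat \<Rightarrow> (nat \<Rightarrow> real^'d) \<Rightarrow> real" where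
  "Cconst K x = lambda_min (gram K x)"

definition delta_m :: "real \<Rightarrow> nat \<Rightarrow> real" where
  "delta_m \<delta> m = \<delta> / (real m)^2"

definition r_m :: "nat \<Rightarrow> real \<Rightarrow> nat \<Rightarrow> real" where
  "r_m K \<delta> m = sqrt (8 * ln ((real K)^2 / delta_m \<delta> m))"

definition D_m :: "nat \<Rightarrow> (nat \<Rightarrow> real^'d) \<Rightarrow> (real^'d) set \<Rightarrow> real" where
  "D_m K x Xm = 2 * (sqrt 2 - 1) *
     sqrt (Cconst K x / (Max {(norm (y - y'))^2 | y y'. y \<in> Xm \<and> y' \<in> Xm \<and> y \<noteq> y'} * ln (real K)))"

definition eps_m :: "nat \<Rightarrow> (nat \<Rightarrow> real^'d) \<Rightarrow> (real^'d) set \<Rightarrow> real \<Rightarrow> nat \<Rightarrow> real" where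
  "eps_m K x Xm \<delta> m = min 1 (D_m K x Xm * sqrt (Cconst K x) / r_m K \<delta> m) * (1/2)^(m+1)"

definition Lambda_m :: "nat \<Rightarrow> (nat \<Rightarrow> real^'d) \<Rightarrow> (real^'d) set \<Rightarrow> real \<Rightarrow> nat \<Rightarrow> (real^'d) set" where
  "Lambda_m K x Xm \<delta> m = {l. l \<in> cball 0 (D_m K x Xm) \<and>
      (\<exists>y\<in>Xm. \<exists>y'\<in>Xm. y' \<noteq> y \<and> l \<bullet> y' \<ge> l \<bullet> y + eps_m K x Xm \<delta> m)}"

text \<open>Design matrix V^m_t of phase m: burn-in (each arm once) plus arms kk s
  played at rounds s = K+1, ..., t.\<close>
definition Vmat :: "nat \<Rightarrow> (nat \<Rightarrow> real^'d) \<Rightarrow> (nat \<Rightarrow> nat) \<Rightarrow> nat \<Rightarrow> real^'d^'d" where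
  "Vmat K x kk t = gram K x + (\<Sum>s\<in>{K<..t}. outer (x (kk s)) (x (kk s)))"

text \<open>Loop condition of step 4: min over Lambda_m of ||l||_V^2 <= r_m^2
  (the minimum is attained, Lambda_m being compact; empty minimum = +infinity).\<close>
definition continue_cond :: "nat \<Rightarrow> (nat \<Rightarrow> real^'d) \<Rightarrow> (real^'d) set \<Rightarrow> real \<Rightarrow> nat \<Rightarrow> real^'d^'d \<Rightarrow> bool" where
  "continue_cond K x Xm \<delta> m V = (\<exists>l\<in>Lambda_m K x Xm \<delta> m. wnorm2 V l \<le> (r_m K \<delta> m)^2)"

end

theory Submission imports Defs begin

lemma outer_mv: "outer a b *v u = (b \<bullet> u) *\<^sub>R a"
  by (simp add: outer_def vec_eq_iff matrix_vector_mult_def inner_vec_def sum_distrib_left mult.commute mult.left_commute)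

lemma sum_mv: "finite S \<Longrightarrow> (\<Sum>s\<in>S. A s) *v (u::real^'d) = (\<Sum>s\<in>S. A s *v u)"
  by (induction S rule: finite_induct) (auto simp: matrix_vector_mult_add_rdistrib)

lemma gram_bil: "a \<bullet> (gram K x *v b) = (\<Sum>k<K. (x k \<bullet> a) * (x k \<bullet> b))"
  unfolding gram_def by (simp add: sum_mv outer_mv inner_sum_right mult.commute inner_commute)

lemma Vmat_quad: "u \<bullet> (gram K x *v u) \<le> u \<bullet> (Vmat K x kk t *v u)"
proof -
  have "u \<bullet> (Vmat K x kk t *v u) = u \<bullet> (gram K x *v u) + (\<Sum>s\<in>{K<..t}. (x (kk s) \<bullet> u)^2)"
    unfolding Vmat_def by (simp add: matrix_vector_mult_add_rdistrib inner_add_right sum_mv outer_mv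
        inner_sum_right power2_eq_square inner_commute)
  moreover have "0 \<le> (\<Sum>s\<in>{K<..t}. (x (kk s) \<bullet> u)^2)" by (simp add: sum_nonneg)
  ultimately show ?thesis by linarith
qed

lemma eig_finite:
  fixes G :: "real^'d^'d"
  assumes sym: "\<And>a b. a \<bullet> (G *v b) = b \<bullet> (G *v a)"
  shows "finite {\<mu>. \<exists>v. v \<noteq> 0 \<and> G *v v = \<mu> *\<^sub>R v}" (is "finite ?S")
proof (rule ccontr)
  assume inf: "infinite ?S"
  obtain T where T: "T \<subseteq> ?S" "finite T" "card T = DIM(real^'d) + 1"
    using infinite_arbitrarily_large[OF inf] by blast
  define e where "e \<mu> = (SOME v. v \<noteq> 0 \<and> G *v v = \<mu> *\<^sub>R v)" for \<mu>
  have e: "e \<mu> \<noteq> 0 \<and> G *v e \<mu> = \<mu> *\<^sub>R e \<mu>" if "\<mu> \<in> ?S" for \<mu>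
    using someI_ex[OF that[simplified]] unfolding e_def by blast
  have orth: "e \<mu> \<bullet> e \<nu> = 0" if "\<mu> \<in> ?S" "\<nu> \<in> ?S" "\<mu> \<noteq> \<nu>" for \<mu> \<nu>
  proof -
    have "\<mu> * (e \<mu> \<bullet> e \<nu>) = e \<nu> \<bullet> (G *v e \<mu>)" using e[OF that(1)] by (simp add: inner_commute)
    also have "\<dots> = e \<mu> \<bullet> (G *v e \<nu>)" by (rule sym)
    also have "\<dots> = \<nu> * (e \<mu> \<bullet> e \<nu>)" using e[OF that(2)] by simp
    finally have "(\<mu> - \<nu>) * (e \<mu> \<bullet> e \<nu>) = 0" by (simp add: algebra_simps)
    then show ?thesis using that(3) by simp
  qed
  have inj: "inj_on e T"
  proof (rule inj_onI)
    fix \<mu> \<nu> assume h: "\<mu> \<in> T" "\<nu> \<in> T" "e \<mu> = e \<nu>"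
    have m: "\<mu> \<in> ?S" "\<nu> \<in> ?S" using h T(1) by auto
    have "\<mu> *\<^sub>R e \<mu> = G *v e \<mu>" using e[OF m(1)] by simp
    also have "\<dots> = G *v e \<nu>" using h(3) by simp
    also have "\<dots> = \<nu> *\<^sub>R e \<mu>" using e[OF m(2)] h(3) by simp
    finally have "\<mu> *\<^sub>R e \<mu> = \<nu> *\<^sub>R e \<mu>" .
    then show "\<mu> = \<nu>" using e[OF m(1)] by simp
  qed
  have po: "pairwise orthogonal (e ` T)"
    unfolding pairwise_def orthogonal_def
  proof (intro ballI impI)
    fix a b assume "a \<in> e ` T" "b \<in> e ` T" "a \<noteq> b"
    then obtain \<mu> \<nu> where "\<mu> \<in> T" "\<nu> \<in> T" "a = e \<mu>" "b = e \<nu>" "\<mu> \<noteq> \<nu>" by blast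
    then show "a \<bullet> b = 0" using orth T(1) by blast
  qed
  have "0 \<notin> e ` T"
  proof
    assume "0 \<in> e ` T"
    then obtain \<mu> where "\<mu> \<in> T" "e \<mu> = 0" by auto
    then show False using e[of \<mu>] T(1) by auto
  qed
  then have "independent (e ` T)" using pairwise_orthogonal_independent po by blast
  then have "card (e ` T) \<le> DIM(real^'d)" using independent_bound by blast
  moreover have "card (e ` T) = card T" using card_image[OF inj] .
  ultimately show False using T(3) by simp
qed

lemma lmin_lower:
  fixes G :: "real^'d^'d"
  assumes sym: "\<And>a b. a \<bullet> (G *v b) = b \<bullet> (G *v a)"
  shows "lambda_min G * (norm v)^2 \<le> v \<bullet> (G *v v)"
proof -
  have cont: "continuous_on (sphere 0 1) (\<lambda>v::real^'d. v \<bullet> (G *v v))"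
    by (intro continuous_intros)
  have ne: "sphere (0::real^'d) 1 \<noteq> {}" by simp
  obtain v0 where v0: "v0 \<in> sphere 0 1" "\<forall>y\<in>sphere 0 1. v0 \<bullet> (G *v v0) \<le> y \<bullet> (G *v y)"
    using continuous_attains_inf[OF compact_sphere ne cont] by blast
  define \<mu> where "\<mu> = v0 \<bullet> (G *v v0)"
  have low: "\<mu> * (norm v)^2 \<le> v \<bullet> (G *v v)" for v
  proof (cases "v = 0")
    case True then show ?thesis by simp
  next
    case False
    define y where "y = v /\<^sub>R norm v"
    have y: "y \<in> sphere 0 1" using False by (simp add: y_def)
    have vy: "v = norm v *\<^sub>R y" using False by (simp add: y_def)
    have "v \<bullet> (G *v v) = (norm v)^2 * (y \<bullet> (G *v y))"
      by (subst (1 2) vy) (simp add: matrix_vector_mult_scaleR power2_eq_square)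
    moreover have "\<mu> \<le> y \<bullet> (G *v y)" using v0(2) y \<mu>_def by blast
    moreover have "\<mu> * (norm v)^2 \<le> (y \<bullet> (G *v y)) * (norm v)^2" by (rule mult_right_mono) (use \<open>\<mu> \<le> _\<close> in simp_all)
    ultimately show ?thesis by (simp add: mult.commute)
  qed
  have n1: "v0 \<bullet> v0 = 1" using v0(1) by (simp add: dot_square_norm)
  have eig: "G *v v0 = \<mu> *\<^sub>R v0"
  proof (rule ccontr)
    assume ne: "G *v v0 \<noteq> \<mu> *\<^sub>R v0"
    define z where "z = G *v v0 - \<mu> *\<^sub>R v0"
    define zz where "zz = z \<bullet> z"
    have zz: "zz > 0" using ne by (simp add: zz_def z_def)
    define c where "c = z \<bullet> (G *v z) - \<mu> * zz"
    have c: "c \<ge> 0" using low[of z] by (simp add: c_def zz_def dot_square_norm)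
    define s where "s = zz / (c + 1)"
    have s: "s > 0" using zz c by (simp add: s_def)
    define t where "t = - s"
    have P: "0 \<le> (v0 + t *\<^sub>R z) \<bullet> (G *v (v0 + t *\<^sub>R z)) - \<mu> * ((v0 + t *\<^sub>R z) \<bullet> (v0 + t *\<^sub>R z))"
      using low[of "v0 + t *\<^sub>R z"] by (simp add: dot_square_norm)
    have e1: "(v0 + t *\<^sub>R z) \<bullet> (G *v (v0 + t *\<^sub>R z)) = v0 \<bullet> (G *v v0) + t * (v0 \<bullet> (G *v z)) + t * (z \<bullet> (G *v v0)) + t^2 * (z \<bullet> (G *v z))"
      by (simp add: matrix_vector_right_distrib matrix_vector_mult_scaleR inner_add_left inner_add_right power2_eq_square distrib_left)
    have e2: "(v0 + t *\<^sub>R z) \<bullet> (v0 + t *\<^sub>R z) = v0 \<bullet> v0 + 2 * t * (v0 \<bullet> z) + t^2 * zz"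
      by (simp add: inner_add_left inner_add_right power2_eq_square zz_def inner_commute)
    have e3: "v0 \<bullet> (G *v z) = z \<bullet> (G *v v0)" by (rule sym)
    have e4: "z \<bullet> (G *v v0) = zz + \<mu> * (v0 \<bullet> z)"
      by (simp add: zz_def z_def inner_diff_left inner_diff_right inner_commute algebra_simps)
    have "0 \<le> 2 * t * zz + t^2 * c"
      using P unfolding e1 e2 e3 e4 n1 \<mu>_def[symmetric] c_def by (simp add: algebra_simps)
    then have "2 * s * zz \<le> s^2 * c" by (simp add: t_def)
    then have "2 * zz \<le> s * c" using s by (simp add: power2_eq_square)
    also have "s * c < zz" using zz c by (simp add: s_def field_simps)
    finally show False using zz by simp
  qed
  have "\<mu> \<in> {\<mu>. \<exists>v. v \<noteq> 0 \<and> G *v v = \<mu> *\<^sub>R v}" proof -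
    have "v0 \<noteq> 0" using v0(1) by auto
    then show ?thesis using eig by blast
  qed
  then have "lambda_min G \<le> \<mu>" unfolding lambda_min_def using eig_finite[OF sym] by simp
  then show ?thesis using low[of v] by (meson dual_order.trans mult_right_mono zero_le_power2)
qed

lemma gram_lower: "Cconst K x * (norm v)^2 \<le> v \<bullet> (gram K x *v v)"
  unfolding Cconst_def by (rule lmin_lower) (simp add: gram_bil mult.commute)

theorem lemma1:
  fixes x :: "nat \<Rightarrow> real^'d"
    and K :: nat and \<delta> :: real and m :: nat
    and Xm :: "(real^'d) set"
    and kk :: "nat \<Rightarrow> nat" and N :: nat
  assumes K2: "K \<ge> 2"
    and arms_inj: "inj_on x {..<K}"
    and arms_norm: "\<forall>k<K. norm (x k) \<le> 1"
    and C_pos: "Cconst K x > 0"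
    and delta: "0 < \<delta>" "\<delta> < 1"
    and m1: "m \<ge> 1"
    and Xm_sub: "Xm \<subseteq> x ` {..<K}"
    and Xm_card: "card Xm > 1"
    and plays: "\<forall>s\<in>{K<..N}. kk s < K"
    and N_ge: "N \<ge> K"
    and before_stop: "\<forall>t. K \<le> t \<and> t < N \<longrightarrow> continue_cond K x Xm \<delta> m (Vmat K x kk t)"
    and stop: "\<not> continue_cond K x Xm \<delta> m (Vmat K x kk N)"
  shows "\<forall>y\<in>Xm. \<forall>y'\<in>Xm. y \<noteq> y' \<longrightarrow>
           wnorm2 (matrix_inv (Vmat K x kk N)) (y - y')
             \<le> ((1/2)^(m+1))^2 / (8 * ln ((real K)^2 / delta_m \<delta> m))"
proof (intro ballI impI)
  fix y y' assume y: "y \<in> Xm" and y': "y' \<in> Xm" and yne: "y \<noteq> y'"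
  define V where "V = Vmat K x kk N"
  define C where "C = Cconst K x"
  have Cp: "C > 0" using C_pos C_def by simp
  have Vq: "C * (norm v)^2 \<le> v \<bullet> (V *v v)" for v
    using gram_lower[of K x v] Vmat_quad[of v K x kk N] unfolding V_def C_def by linarith
  have ker: "\<forall>v. V *v v = 0 \<longrightarrow> v = 0"
  proof (intro allI impI)
    fix v assume "V *v v = 0"
    then have "C * (norm v)^2 \<le> 0" using Vq[of v] by simp
    then show "v = 0" using Cp by (simp add: mult_le_0_iff)
  qed
  then obtain B where "B ** V = mat 1" using matrix_left_invertible_ker by blast
  then have "V ** B = mat 1" using matrix_left_right_inverse by blast
  then have "\<exists>A'. V ** A' = mat 1 \<and> A' ** V = mat 1" using \<open>B ** V = mat 1\<close> by blast
  then have inv: "V ** matrix_inv V = mat 1" unfolding matrix_inv_def by (rule someI2_ex) blast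
  define w where "w = y - y'"
  define u where "u = matrix_inv V *v w"
  have Vu: "V *v u = w" unfolding u_def by (simp add: matrix_vector_mul_assoc inv)
  have wnz: "w \<noteq> 0" using yne by (simp add: w_def)
  have unz: "u \<noteq> 0" using Vu wnz by auto
  define q where "q = u \<bullet> (V *v u)"
  have goalq: "wnorm2 (matrix_inv V) w = q"
    unfolding wnorm2_def q_def u_def[symmetric] by (simp add: Vu[symmetric] inner_commute)
  have nu: "C * (norm u)^2 \<le> q" using Vq[of u] q_def by simp
  have qp: "q > 0" using nu Cp unz by (smt (verit) mult_pos_pos zero_less_norm_iff zero_less_power)
  have nu2: "(norm u)^2 \<le> q / C" using nu Cp by (simp add: field_simps)
  define h :: real where "h = (1/2)^(m+1)"
  define L where "L = ln ((real K)^2 / delta_m \<delta> m)"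
  define r where "r = r_m K \<delta> m"
  have arg: "(real K)^2 / delta_m \<delta> m > 1"
  proof -
    have "real K ^ 2 * real m ^ 2 \<ge> 1"
      using K2 m1 by (metis one_le_power less_eq_real_def mult_ge1_I of_nat_1 of_nat_le_iff dual_order.trans one_le_numeral nat_le_real_less)
    then have "real K ^ 2 * real m ^ 2 > \<delta>" using delta by linarith
    then show ?thesis using delta m1 by (simp add: delta_m_def field_simps)
  qed
  have Lp: "L > 0" using arg L_def by simp
  have rp: "r > 0" unfolding r_def r_m_def using Lp L_def by simp
  have r2: "r^2 = 8 * L" unfolding r_def r_m_def using Lp L_def by simp
  define M where "M = Max {(norm (a - b))^2 | a b. a \<in> Xm \<and> b \<in> Xm \<and> a \<noteq> b}"
  have finXm: "finite Xm" using Xm_sub finite_subset by blast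
  have "{(norm (a - b))^2 | a b. a \<in> Xm \<and> b \<in> Xm \<and> a \<noteq> b} \<subseteq> (\<lambda>(a,b). (norm (a - b))^2) ` (Xm \<times> Xm)"
    by auto
  then have finM: "finite {(norm (a - b))^2 | a b. a \<in> Xm \<and> b \<in> Xm \<and> a \<noteq> b}"
    using finXm finite_subset by blast
  have "(norm (y - y'))^2 \<le> M" unfolding M_def by (rule Max_ge[OF finM]) (use y y' yne in blast)
  moreover have "(norm (y - y'))^2 > 0" using yne by simp
  ultimately have Mp: "M > 0" by linarith
  have lnK: "ln (real K) > 0" using K2 by simp
  define D where "D = D_m K x Xm"
  have Dp: "D > 0" unfolding D_def D_m_def C_def[symmetric] M_def[symmetric]
    using Cp Mp lnK by (simp add: mult_pos_pos)
  define a where "a = D * sqrt C / r"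
  have ap: "a > 0" using Dp Cp rp by (simp add: a_def)
  define eps where "eps = eps_m K x Xm \<delta> m"
  have eps_def2: "eps = min 1 a * h" unfolding eps_def eps_m_def a_def D_def r_def C_def h_def by simp
  have hp: "h > 0" by (simp add: h_def)
  have epsp: "eps > 0" using eps_def2 ap hp by simp
  have eps_h: "eps \<le> h" using eps_def2 ap hp by (simp add: mult_right_le_one_le min_le_iff_disj)
  have eps_a: "eps \<le> a * h" using eps_def2 ap hp by (simp add: mult_right_mono)
  have rhs: "((1/2)^(m+1))^2 / (8 * ln ((real K)^2 / delta_m \<delta> m)) = h^2 / r^2"
    by (simp add: h_def r2 L_def)
  have "q < h^2 / r^2"
  proof -
    define l where "l = (eps / q) *\<^sub>R u"
    have nl: "norm l = eps / q * norm u" using epsp qp by (simp add: l_def)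
    show ?thesis
    proof (cases "norm l \<le> D")
      case True
      have "l \<bullet> w = eps" using qp
        by (simp add: l_def q_def Vu[symmetric])
      then have "l \<bullet> y \<ge> l \<bullet> y' + eps" by (simp add: w_def inner_diff_right)
      then have "l \<in> Lambda_m K x Xm \<delta> m"
        unfolding Lambda_m_def using True y y' yne by (auto simp: D_def eps_def)
      then have "\<not> wnorm2 V l \<le> r^2" using stop unfolding continue_cond_def V_def r_def by blast
      moreover have "wnorm2 V l = eps^2 / q"
        using qp by (simp add: wnorm2_def l_def matrix_vector_mult_scaleR q_def[symmetric] power2_eq_square)
      ultimately have "r^2 < eps^2 / q" by simp
      then have "q < eps^2 / r^2" using qp rp by (simp add: field_simps)
      also have "eps^2 / r^2 \<le> h^2 / r^2"
        using eps_h epsp by (intro divide_right_mono power_mono) auto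
      finally show ?thesis .
    next
      case False
      then have "D^2 < (eps / q * norm u)^2" using Dp nl by (intro power_strict_mono) auto
      also have "\<dots> = eps^2 / q^2 * (norm u)^2" by (simp add: power_mult_distrib power_divide)
      also have "\<dots> \<le> eps^2 / q^2 * (q / C)" using nu2 qp by (intro mult_left_mono) auto
      also have "\<dots> = eps^2 / (C * q)" using qp Cp by (simp add: field_simps power2_eq_square)
      finally have "D^2 < eps^2 / (C * q)" .
      then have "q < eps^2 / (C * D^2)" using qp Cp Dp by (simp add: field_simps)
      also have "eps^2 \<le> (a * h)^2" using eps_a epsp by (intro power_mono) auto
      then have "eps^2 / (C * D^2) \<le> (a*h)^2 / (C * D^2)" using Cp Dp by (intro divide_right_mono) auto
      also have "(a*h)^2 / (C * D^2) = h^2 / r^2"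
        using Cp Dp rp by (simp add: a_def power_mult_distrib power_divide field_simps)
      finally show ?thesis .
    qed
  qed
  then show "wnorm2 (matrix_inv (Vmat K x kk N)) (y - y') \<le> ((1/2)^(m+1))^2 / (8 * ln ((real K)^2 / delta_m \<delta> m))"
    using goalq rhs by (simp add: V_def w_def)
qed

end
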